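(* Let $n\ge2$, let $y_{\mathrm{ref}}=(0,\dots,0,1)\in O_n$ and $\ket{\psi_{\mathrm{ref}}}=\ket{\psi_{y_{\mathrm{ref}}}}$. For $y\in O_n$ define $u=y\oplus y_{\mathrm{ref}}\in\{0,1\}^n$, $v\in\{0,1\}^n$ by $v_l=\sum_{j=1}^{l-1}u_j \bmod 2$ for $l=1,\dots,n$, and $v'\in\{0,1\}^{n-1}$ by $v'_i=v_i+v_n \bmod 2$. Let $D(u,v')=Z(v')X(u)$ where $X(u)=\bigotimes_{i=1}^{n-1}X_i^{u_i}$ and $Z(v')=\bigotimes_{i=1}^{n-1}Z_i^{v'_i}$ act on $n-1$ qubits. Then $$\ket{\psi_y}=(-1)^{v\cdot y}\,D(u,v')\ket{\psi_{\mathrm{ref}}},$$ where $v\cdot y=\sum_{i=1}^n v_iy_i \bmod 2$.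
   Context: $E_n$ and $O_n$ are the even- and odd-weight strings in $\{0,1\}^n$. For $x\in E_n$, $\ket{\psi_x}=\ket{x_1\cdots x_{n-1}}$ (computational basis of $n-1$ qubits). For $y\in O_n$, $\ket{\psi_y}=\frac1{\sqrt n}\sum_{x\in E_n,\,d_H(x,y)=1}(A_n)_{yx}\ket{\psi_x}$, where $(A_n)_{yx}=\bra{y}A_n\ket{x}$ in the $n$-qubit computational basis (qubit 1 leftmost) and $A_n=\sum_{l=1}^nZ^{\otimes(l-1)}\otimes X\otimes I^{\otimes(n-l)}$. $X_i,Z_i$ are Pauli operators on qubit $i$; $d_H$ is Hamming distance. *)

theory Defs
  imports Complex_Main
begin

text \<open>Bit strings are lists of booleans; qubit 1 is the head of the list (index 0).\<close>

definition bitstrings :: "nat \<Rightarrow> bool list set" where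
  "bitstrings m = {w. length w = m}"

definition weight :: "bool list \<Rightarrow> nat" where
  "weight x = count_list x True"

definition even_strs :: "nat \<Rightarrow> bool list set" where
  "even_strs n = {x \<in> bitstrings n. even (weight x)}"

definition odd_strs :: "nat \<Rightarrow> bool list set" where
  "odd_strs n = {x \<in> bitstrings n. odd (weight x)}"

definition hamming :: "bool list \<Rightarrow> bool list \<Rightarrow> nat" where
  "hamming x y = card {i. i < length x \<and> x ! i \<noteq> y ! i}"

definition xor_str :: "bool list \<Rightarrow> bool list \<Rightarrow> bool list" where
  "xor_str x y = map2 (\<noteq>) x y"

text \<open>Single-qubit Pauli operators and their matrix elements \<open>\<langle>b|P|a\<rangle>\<close>
  (basis state True = |1>).\<close>

datatype pauli = PI | PX | PZ

fun pauli_elem :: "pauli \<Rightarrow> bool \<Rightarrow> bool \<Rightarrow> complex" where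
  "pauli_elem PI b a = (if b = a then 1 else 0)"
| "pauli_elem PX b a = (if b \<noteq> a then 1 else 0)"
| "pauli_elem PZ b a = (if b = a then (if a then -1 else 1) else 0)"

definition pstring_elem :: "pauli list \<Rightarrow> bool list \<Rightarrow> bool list \<Rightarrow> complex" where
  "pstring_elem ps y x = (\<Prod>i<length ps. pauli_elem (ps ! i) (y ! i) (x ! i))"

definition apply_op :: "nat \<Rightarrow> (bool list \<Rightarrow> bool list \<Rightarrow> complex)
    \<Rightarrow> (bool list \<Rightarrow> complex) \<Rightarrow> (bool list \<Rightarrow> complex)" where
  "apply_op m M \<phi> = (\<lambda>z. if length z = m then (\<Sum>w\<in>bitstrings m. M z w * \<phi> w) else 0)"

definition ket :: "bool list \<Rightarrow> (bool list \<Rightarrow> complex)" where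
  "ket b = (\<lambda>z. if z = b then 1 else 0)"

definition A_elem :: "nat \<Rightarrow> bool list \<Rightarrow> bool list \<Rightarrow> complex" where
  "A_elem n y x = (\<Sum>l\<in>{1..n}.
     pstring_elem (map (\<lambda>i. if i < l then PZ else if i = l then PX else PI) [1..<n+1]) y x)"

definition psi_even :: "nat \<Rightarrow> bool list \<Rightarrow> (bool list \<Rightarrow> complex)" where
  "psi_even n x = ket (take (n - 1) x)"

definition psi_odd :: "nat \<Rightarrow> bool list \<Rightarrow> (bool list \<Rightarrow> complex)" where
  "psi_odd n y = (\<lambda>z. complex_of_real (1 / sqrt (real n)) *
      (\<Sum>x\<in>{x \<in> even_strs n. hamming x y = 1}. A_elem n y x * psi_even n x z))"

definition psi :: "nat \<Rightarrow> bool list \<Rightarrow> (bool list \<Rightarrow> complex)" where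
  "psi n x = (if x \<in> even_strs n then psi_even n x else psi_odd n x)"

definition X_op :: "bool list \<Rightarrow> pauli list" where
  "X_op u = map (\<lambda>b. if b then PX else PI) u"

definition Z_op :: "bool list \<Rightarrow> pauli list" where
  "Z_op v = map (\<lambda>b. if b then PZ else PI) v"

definition D_op :: "nat \<Rightarrow> bool list \<Rightarrow> bool list \<Rightarrow> (bool list \<Rightarrow> complex) \<Rightarrow> (bool list \<Rightarrow> complex)" where
  "D_op n u v' \<phi> = apply_op (n - 1) (pstring_elem (Z_op v'))
                    (apply_op (n - 1) (pstring_elem (X_op (take (n - 1) u))) \<phi>)"

end

theory Submission
  imports Defs "HOL-Library.Z2"
begin
declare add_bit_eq_xor[simp del] mult_bit_eq_and[simp del]
lemma bit_of_nat: "(of_nat k :: bit) = of_bool (odd k)"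
  by (induction k) auto
lemma bit_xx: "(x::bit) + x = 0"
  by (metis mult_2 bit_2_eq_0 mult_zero_left)
lemma bit_neq: "(of_bool (p \<noteq> q) :: bit) = of_bool p + of_bool q"
  by (cases p; cases q) (simp_all only: of_bool_eq simp_thms bit_xx add_0 add_0_right)

lemma count_card: "count_list xs True = card {i. i < length xs \<and> xs ! i}"
  by (simp add: count_list_eq_length_filter length_filter_conv_card)

lemma card_sum_of_bool: "(of_nat (card {i. i < (k::nat) \<and> P i}) :: 'a::semiring_1) = (\<Sum>i<k. of_bool (P i))"
proof -
  have e: "{i. i < k \<and> P i} = {i \<in> {..<k}. P i}" by auto
  have "(of_nat (card {i. i < k \<and> P i}) :: 'a) = (\<Sum>i\<in>{i \<in> {..<k}. P i}. 1)"
    unfolding e by (simp only: sum_constant mult_1_right)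
  also have "\<dots> = (\<Sum>i<k. if P i then 1 else 0)"
    by (rule sum.inter_filter) simp
  also have "\<dots> = (\<Sum>i<k. of_bool (P i))"
    by (intro sum.cong refl) simp
  finally show ?thesis .
qed

lemma count_bit: "(of_nat (count_list xs True) :: bit) = (\<Sum>i<length xs. of_bool (xs ! i))"
  by (simp add: count_card card_sum_of_bool)

lemma sign_prod: "finite A \<Longrightarrow> (\<Prod>i\<in>A. if P i then -1 else 1 :: complex) = (-1) ^ card {i \<in> A. P i}"
proof -
  assume f: "finite A"
  have "(\<Prod>i\<in>A. if P i then -1 else 1 :: complex) = (\<Prod>i\<in>A \<inter> {x. P x}. -1)"
    using prod.If_cases[OF f, of P "\<lambda>_. -1::complex" "\<lambda>_. 1"] by simp
  also have "\<dots> = (-1) ^ card (A \<inter> {x. P x})" by simp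
  also have "A \<inter> {x. P x} = {i \<in> A. P i}" by auto
  finally show ?thesis .
qed

lemma prod_ind: "finite A \<Longrightarrow> (\<Prod>i\<in>A. if P i then 1 else 0 :: complex) = (if \<forall>i\<in>A. P i then 1 else 0)"
  by (auto simp: prod_zero)

lemma finite_bitstrings: "finite (bitstrings m)"
proof -
  show ?thesis using finite_lists_length_eq[of "UNIV::bool set" m] by (simp add: bitstrings_def)
qed

lemma applyX: assumes "length a = m"
  shows "apply_op m (pstring_elem (X_op a)) \<phi> = (\<lambda>w. if length w = m then \<phi> (xor_str w a) else 0)"
proof
  fix w
  show "apply_op m (pstring_elem (X_op a)) \<phi> w = (if length w = m then \<phi> (xor_str w a) else 0)"
  proof (cases "length w = m")
    case True
    have el: "pstring_elem (X_op a) w w' = (if w' = xor_str w a then 1 else 0)" if "w' \<in> bitstrings m" for w'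
    proof -
      have lw': "length w' = m" using that by (simp add: bitstrings_def)
      have "pstring_elem (X_op a) w w' = (\<Prod>i<m. if w' ! i = (w ! i \<noteq> a ! i) then 1 else 0)"
        unfolding pstring_elem_def X_op_def using assms by (intro prod.cong) auto
      also have "\<dots> = (if \<forall>i\<in>{..<m}. w' ! i = (w ! i \<noteq> a ! i) then 1 else 0)" by (rule prod_ind) simp
      also have "(\<forall>i\<in>{..<m}. w' ! i = (w ! i \<noteq> a ! i)) \<longleftrightarrow> w' = xor_str w a"
        using lw' True assms by (auto simp: xor_str_def list_eq_iff_nth_eq)
      finally show ?thesis .
    qed
    have mem: "xor_str w a \<in> bitstrings m" using True assms by (simp add: bitstrings_def xor_str_def)
    have "apply_op m (pstring_elem (X_op a)) \<phi> w = (\<Sum>w'\<in>bitstrings m. if w' = xor_str w a then \<phi> w' else 0)"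
      unfolding apply_op_def using True el by (auto intro!: sum.cong)
    also have "\<dots> = \<phi> (xor_str w a)" by (simp only: sum.delta[OF finite_bitstrings] mem if_True)
    finally show ?thesis using True by simp
  next
    case False then show ?thesis by (simp add: apply_op_def)
  qed
qed

lemma applyZ: assumes "length v = m"
  shows "apply_op m (pstring_elem (Z_op v)) \<phi> = (\<lambda>z. if length z = m then (-1) ^ card {i. i < m \<and> v ! i \<and> z ! i} * \<phi> z else 0)"
proof
  fix z
  show "apply_op m (pstring_elem (Z_op v)) \<phi> z = (if length z = m then (-1) ^ card {i. i < m \<and> v ! i \<and> z ! i} * \<phi> z else 0)"
  proof (cases "length z = m")
    case True
    have el: "pstring_elem (Z_op v) z w = (if w = z then (-1) ^ card {i. i < m \<and> v ! i \<and> z ! i} else 0)" if "w \<in> bitstrings m" for w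
    proof (cases "w = z")
      case True
      have "pstring_elem (Z_op v) z w = (\<Prod>i\<in>{..<m}. if v ! i \<and> z ! i then -1 else 1)"
        unfolding pstring_elem_def Z_op_def using assms True by (intro prod.cong) auto
      also have "\<dots> = (-1) ^ card {i \<in> {..<m}. v ! i \<and> z ! i}" by (rule sign_prod) simp
      also have "{i \<in> {..<m}. v ! i \<and> z ! i} = {i. i < m \<and> v ! i \<and> z ! i}" by auto
      finally show ?thesis using True by simp
    next
      case False
      have lw: "length w = m" using that by (simp add: bitstrings_def)
      then obtain i where i: "i < m" "w ! i \<noteq> z ! i" using False \<open>length z = m\<close> by (auto simp: list_eq_iff_nth_eq)
      have "pstring_elem (Z_op v) z w = 0"
        unfolding pstring_elem_def Z_op_def
        apply (rule prod_zero)
         apply simp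
        apply (rule bexI[of _ i])
        using assms i by auto
      then show ?thesis using False by simp
    qed
    have mem: "z \<in> bitstrings m" using True by (simp add: bitstrings_def)
    have "apply_op m (pstring_elem (Z_op v)) \<phi> z = (\<Sum>w\<in>bitstrings m. if w = z then (-1) ^ card {i. i < m \<and> v ! i \<and> z ! i} * \<phi> w else 0)"
      unfolding apply_op_def apply (subst if_P[OF True])
      apply (rule sum.cong[OF refl]) by (simp add: el)
    also have "\<dots> = (-1) ^ card {i. i < m \<and> v ! i \<and> z ! i} * \<phi> z" by (simp only: sum.delta[OF finite_bitstrings] mem if_True)
    finally show ?thesis using True by simp
  next
    case False then show ?thesis by (simp add: apply_op_def)
  qed
qed

lemma bit_alg:
  fixes V Y :: "nat \<Rightarrow> bit"
  assumes V: "\<And>i. i \<le> m \<Longrightarrow> V i = (\<Sum>j<i. Y j)"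
    and tot: "(\<Sum>j<Suc m. Y j) = 1" and l: "l < Suc m"
  shows "(\<Sum>j<l. Y j) + (\<Sum>i<Suc m. V i * Y i) + (\<Sum>i<m. (V i + V m) * (Y i + of_bool (i = l))) = 0"
proof -
  have e1: "(\<Sum>i<m. (V i + V m) * (Y i + of_bool (i = l))) =
      (\<Sum>i<m. V i * Y i) + V m * (\<Sum>i<m. Y i) + (\<Sum>i<m. (V i + V m) * of_bool (i = l))"
    by (simp add: algebra_simps sum.distrib sum_distrib_left)
  have e2: "(\<Sum>i<m. (V i + V m) * of_bool (i = l)) = (if l < m then V l + V m else 0)"
  proof -
    have "(\<Sum>i<m. (V i + V m) * of_bool (i = l)) = (\<Sum>i<m. if i = l then V i + V m else 0)"
      by (intro sum.cong refl) simp
    also have "\<dots> = (if l < m then V l + V m else 0)" by (simp only: sum.delta[OF finite_lessThan]) simp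
    finally show ?thesis .
  qed
  have e3: "(\<Sum>i<Suc m. V i * Y i) = (\<Sum>i<m. V i * Y i) + V m * Y m" by simp
  have e4: "(\<Sum>i<m. Y i) + Y m = 1" using tot by simp
  have Vm: "V m = (\<Sum>i<m. Y i)" using V by simp
  have xx: "\<And>x::bit. x + x = 0" by (rule bit_xx)
  have "(\<Sum>j<l. Y j) + (\<Sum>i<Suc m. V i * Y i) + (\<Sum>i<m. (V i + V m) * (Y i + of_bool (i = l)))
      = (\<Sum>j<l. Y j) + ((\<Sum>i<m. V i * Y i) + (\<Sum>i<m. V i * Y i)) + V m * ((\<Sum>i<m. Y i) + Y m)
        + (if l < m then V l + V m else 0)"
    unfolding e1 e2 e3 by (simp add: algebra_simps)
  also have "\<dots> = (\<Sum>j<l. Y j) + V m + (if l < m then V l + V m else 0)"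
    unfolding e4 xx by simp
  also have "\<dots> = 0"
  proof (cases "l < m")
    case True
    then have "V l = (\<Sum>j<l. Y j)" using V by simp
    then show ?thesis using True by (simp add: algebra_simps xx)
  next
    case False
    then have "l = m" using l by simp
    then show ?thesis using Vm xx by simp
  qed
  finally show ?thesis .
qed

lemma A_elem_flip:
  assumes "length y = n" "l < n"
  shows "A_elem n y (y[l := \<not> y ! l]) = (-1) ^ count_list (take l y) True"
proof -
  define ps where "ps l' = map (\<lambda>i. if i < l' then PZ else if i = l' then PX else PI) [1..<n+1]" for l'
  define x where "x = y[l := \<not> y ! l]"
  have len: "length (ps l') = n" for l' by (simp add: ps_def)
  have nth: "ps l' ! i = (if Suc i < l' then PZ else if Suc i = l' then PX else PI)" if "i < n" for l' i
    using that by (simp add: ps_def del: upt_Suc)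
  have xn: "x ! i = (if i = l then \<not> y ! i else y ! i)" for i
    using assms by (simp add: x_def nth_list_update)
  define T where "T l' = (\<Prod>i<n. pauli_elem (ps l' ! i) (y ! i) (x ! i))" for l'
  have A: "A_elem n y x = (\<Sum>l'\<in>{1..n}. T l')"
    unfolding A_elem_def T_def pstring_elem_def ps_def by simp
  have z: "T l' = 0" if "l' \<noteq> Suc l" for l'
    unfolding T_def
    apply (rule prod_zero)
     apply simp
    apply (rule bexI[of _ l])
    using assms that by (auto simp: nth xn)
  have "(\<Sum>l'\<in>{1..n}. T l') = (\<Sum>l'\<in>{1..n}. if l' = Suc l then T l' else 0)"
    by (intro sum.cong refl) (simp add: z)
  also have "\<dots> = T (Suc l)" using assms by (simp only: sum.delta[OF finite_atLeastAtMost]) simp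
  also have "T (Suc l) = (\<Prod>i\<in>{..<n}. if i < l \<and> y ! i then -1 else 1)"
    unfolding T_def using assms by (intro prod.cong refl) (auto simp: nth xn)
  also have "\<dots> = (-1) ^ card {i \<in> {..<n}. i < l \<and> y ! i}" by (rule sign_prod) simp
  also have "{i \<in> {..<n}. i < l \<and> y ! i} = {i. i < length (take l y) \<and> take l y ! i}"
    using assms by auto
  finally have "sum T {1..n} = (-1) ^ card {i. i < length (take l y) \<and> take l y ! i}" .
  then show ?thesis using A by (simp add: count_card x_def)
qed

lemma flip_even:
  assumes "y \<in> odd_strs n" "l < n"
  shows "y[l := \<not> y ! l] \<in> even_strs n"
proof -
  have ly: "length y = n" using assms by (simp add: odd_strs_def bitstrings_def)
  have "(of_nat (count_list (y[l := \<not> y ! l]) True) :: bit) = (\<Sum>i<n. of_bool (y[l := \<not> y ! l] ! i))"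
    using ly by (simp add: count_bit)
  also have "\<dots> = (\<Sum>i<n. of_bool (y ! i) + of_bool (i = l))"
    using ly assms(2) by (intro sum.cong refl) (auto simp: nth_list_update bit_neq[symmetric])
  also have "\<dots> = (\<Sum>i<n. of_bool (y ! i)) + 1"
    using assms(2) by (simp add: sum.distrib)
  also have "(\<Sum>i<n. of_bool (y ! i)) = (of_nat (count_list y True) :: bit)"
    using ly by (simp add: count_bit)
  also have "\<dots> = 1" using assms by (simp add: bit_of_nat odd_strs_def weight_def)
  finally have "(of_nat (count_list (y[l := \<not> y ! l]) True) :: bit) = 0" by (simp add: bit_xx)
  then show ?thesis using ly by (simp add: even_strs_def bitstrings_def weight_def bit_of_nat)
qed

lemma ham_set:
  assumes "y \<in> odd_strs n"
  shows "{x \<in> even_strs n. hamming x y = 1} = (\<lambda>l. y[l := \<not> y ! l]) ` {..<n}"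
proof
  have ly: "length y = n" using assms by (simp add: odd_strs_def bitstrings_def)
  show "(\<lambda>l. y[l := \<not> y ! l]) ` {..<n} \<subseteq> {x \<in> even_strs n. hamming x y = 1}"
  proof
    fix x assume "x \<in> (\<lambda>l. y[l := \<not> y ! l]) ` {..<n}"
    then obtain l where l: "l < n" "x = y[l := \<not> y ! l]" by auto
    have "{i. i < length x \<and> x ! i \<noteq> y ! i} = {l}" using l ly by (auto simp: nth_list_update)
    then have "hamming x y = 1" by (simp add: hamming_def)
    then show "x \<in> {x \<in> even_strs n. hamming x y = 1}" using flip_even[OF assms l(1)] l by simp
  qed
  show "{x \<in> even_strs n. hamming x y = 1} \<subseteq> (\<lambda>l. y[l := \<not> y ! l]) ` {..<n}"
  proof
    fix x assume x: "x \<in> {x \<in> even_strs n. hamming x y = 1}"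
    then have lx: "length x = n" by (simp add: even_strs_def bitstrings_def)
    have "card {i. i < length x \<and> x ! i \<noteq> y ! i} = 1" using x by (simp add: hamming_def)
    then obtain l where l: "{i. i < length x \<and> x ! i \<noteq> y ! i} = {l}" by (rule card_1_singletonE)
    then have ln: "l < n" and d: "x ! l \<noteq> y ! l" using lx by auto
    have "x = y[l := \<not> y ! l]"
    proof (rule nth_equalityI)
      show "length x = length (y[l := \<not> y ! l])" using lx ly by simp
      fix i assume "i < length x"
      then show "x ! i = y[l := \<not> y ! l] ! i" using l d ly lx by (cases "i = l") (auto simp: nth_list_update)
    qed
    then show "x \<in> (\<lambda>l. y[l := \<not> y ! l]) ` {..<n}" using ln by auto
  qed
qed

lemma psi_odd_form:
  assumes "y \<in> odd_strs n"
  shows "psi_odd n y z = complex_of_real (1 / sqrt (real n)) *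
     (\<Sum>l<n. (-1) ^ count_list (take l y) True * ket (take (n - 1) (y[l := \<not> y ! l])) z)"
proof -
  have ly: "length y = n" using assms by (simp add: odd_strs_def bitstrings_def)
  have inj: "inj_on (\<lambda>l. y[l := \<not> y ! l]) {..<n}"
  proof (rule inj_onI)
    fix a b assume a: "a \<in> {..<n}" and b: "b \<in> {..<n}" and e: "y[a := \<not> y ! a] = y[b := \<not> y ! b]"
    show "a = b"
    proof (rule ccontr)
      assume "a \<noteq> b"
      have "y[a := \<not> y ! a] ! a = y[b := \<not> y ! b] ! a" using e by simp
      then show False using \<open>a \<noteq> b\<close> a ly by (simp add: nth_list_update)
    qed
  qed
  show ?thesis
    unfolding psi_odd_def ham_set[OF assms] sum.reindex[OF inj]
    using ly by (simp add: A_elem_flip psi_even_def)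
qed

lemma sign_from_bit:
  assumes "(of_nat (a + b + c) :: bit) = 0"
  shows "(-1::complex) ^ a = (-1) ^ b * (-1) ^ c"
proof -
  have "even (a + b + c)" using assms by (simp add: bit_of_nat)
  then have "even a = even (b + c)" by auto
  then show ?thesis by (simp add: power_add[symmetric] minus_one_power_iff)
qed

theorem theorem2:
  fixes n :: nat and y :: "bool list"
  assumes "n \<ge> 2" and "y \<in> odd_strs n"
  defines "yref \<equiv> replicate (n - 1) False @ [True]"
  defines "u \<equiv> xor_str y yref"
  defines "v \<equiv> map (\<lambda>k. odd (count_list (take k u) True)) [0..<n]"
  defines "v' \<equiv> map (\<lambda>i. v ! i \<noteq> v ! (n - 1)) [0..<n - 1]"
  shows "psi n y = (\<lambda>z. (-1) ^ card {i. i < n \<and> v ! i \<and> y ! i} * D_op n u v' (psi n yref) z)"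
proof
  fix z
  obtain m where nm: "n = Suc m" using assms(1) by (cases n) auto
  have m1: "n - 1 = m" using nm by simp
  have ly: "length y = n" using assms(2) by (simp add: odd_strs_def bitstrings_def)
  have yodd: "odd (count_list y True)" using assms(2) by (simp add: odd_strs_def weight_def)
  have lyref: "length yref = n" using nm by (simp add: yref_def)
  have yref_nth: "yref ! i = (i = m)" if "i < n" for i
    using that nm by (simp add: yref_def nth_append)
  have yref_odd: "yref \<in> odd_strs n"
    using lyref by (simp add: yref_def odd_strs_def bitstrings_def weight_def)
  have lu: "length u = n" using ly lyref by (simp add: u_def xor_str_def)
  have u_nth: "u ! i = (y ! i \<noteq> (i = m))" if "i < n" for i
    using that ly lyref yref_nth by (simp add: u_def xor_str_def)
  have lv: "length v = n" by (simp add: v_def)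
  have v_nth: "v ! k = odd (count_list (take k u) True)" if "k < n" for k
    using that by (simp add: v_def del: upt_Suc)
  have lv': "length v' = m" using nm by (simp add: v'_def)
  have v'_nth: "v' ! i = (v ! i \<noteq> v ! m)" if "i < m" for i
    using that m1 by (simp add: v'_def)
  have psiy: "psi n y = psi_odd n y" using assms(2) by (simp add: psi_def odd_strs_def even_strs_def)
  have psiref: "psi n yref = psi_odd n yref" using yref_odd by (simp add: psi_def odd_strs_def even_strs_def)
  define a where "a = take m u"
  have la: "length a = m" using lu nm by (simp add: a_def)
  have D: "D_op n u v' \<phi> w = (if length w = m then (-1) ^ card {i. i < m \<and> v' ! i \<and> w ! i} * \<phi> (xor_str w a) else 0)" for \<phi> w
    unfolding D_op_def m1 applyZ[OF lv'] applyX[OF la[unfolded a_def]] a_def by simp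
  define c where "c = complex_of_real (1 / sqrt (real n))"
  define T where "T l = take m (y[l := \<not> y ! l])" for l
  define R where "R l = take m (yref[l := \<not> yref ! l])" for l
  define \<sigma> where "\<sigma> = (-1::complex) ^ card {i. i < n \<and> v ! i \<and> y ! i}"
  have LHS: "psi n y z = c * (\<Sum>l<n. (-1) ^ count_list (take l y) True * ket (T l) z)"
    unfolding psiy psi_odd_form[OF assms(2)] c_def T_def m1 ..
  have cref: "count_list (take l yref) True = 0" if "l < n" for l
  proof -
    have "take l yref = replicate l False" using that nm by (simp add: yref_def)
    then show ?thesis by simp
  qed
  have RHSref: "psi n yref w = c * (\<Sum>l<n. ket (R l) w)" for w
    unfolding psiref psi_odd_form[OF yref_odd] c_def R_def m1 by (simp add: cref)
  show "psi n y z = (-1) ^ card {i. i < n \<and> v ! i \<and> y ! i} * D_op n u v' (psi n yref) z"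
  proof (cases "length z = m")
    case False
    have "ket (T l) z = 0" if "l < n" for l
      using False that ly nm by (auto simp: ket_def T_def)
    then have "psi n y z = 0" unfolding LHS by simp
    then show ?thesis using False by (simp add: D)
  next
    case True
    have key: "ket (R l) (xor_str z a) = ket (T l) z" if "l < n" for l
    proof -
      have "(xor_str z a = R l) \<longleftrightarrow> (z = T l)"
        using True la ly lyref that nm u_nth yref_nth
        by (auto simp: list_eq_iff_nth_eq xor_str_def R_def T_def a_def nth_list_update)
      then show ?thesis by (simp add: ket_def)
    qed
    have sign: "(-1) ^ count_list (take l y) True = \<sigma> * (-1) ^ card {i. i < m \<and> v' ! i \<and> T l ! i}"
      if l: "l < n" for l
    proof -
      define Y where "Y i = (of_bool (y ! i) :: bit)" for i
      define V where "V i = (of_bool (v ! i) :: bit)" for i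
      have s1: "(of_nat (count_list (take l y) True) :: bit) = (\<Sum>j<l. Y j)"
        using l ly by (simp add: count_bit Y_def)
      have s2: "(of_nat (card {i. i < n \<and> v ! i \<and> y ! i}) :: bit) = (\<Sum>i<Suc m. V i * Y i)"
        unfolding nm card_sum_of_bool by (intro sum.cong refl) (simp add: V_def Y_def)
      have s3: "(of_nat (card {i. i < m \<and> v' ! i \<and> T l ! i}) :: bit)
          = (\<Sum>i<m. (V i + V m) * (Y i + of_bool (i = l)))"
        unfolding card_sum_of_bool
      proof (intro sum.cong refl)
        fix i assume "i \<in> {..<m}"
        then have i: "i < m" by simp
        have "T l ! i = (y ! i \<noteq> (i = l))" using i ly nm by (auto simp: T_def nth_list_update)
        then show "of_bool (v' ! i \<and> T l ! i) = (V i + V m) * (Y i + of_bool (i = l))"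
          using i by (simp only: of_bool_conj v'_nth bit_neq V_def Y_def)
      qed
      have Vk: "V k = (\<Sum>j<k. Y j)" if "k \<le> m" for k
      proof -
        have "V k = of_nat (count_list (take k u) True)"
          using that nm by (simp add: V_def v_nth bit_of_nat)
        also have "\<dots> = (\<Sum>j<k. of_bool (take k u ! j))"
          using that nm lu by (simp add: count_bit)
        also have "\<dots> = (\<Sum>j<k. Y j)"
          using that nm by (intro sum.cong refl) (simp add: u_nth Y_def)
        finally show ?thesis .
      qed
      have tot: "(\<Sum>j<Suc m. Y j) = 1"
      proof -
        have "(\<Sum>j<Suc m. Y j) = of_nat (count_list y True)"
          using ly nm by (simp add: count_bit Y_def)
        then show ?thesis using yodd by (simp add: bit_of_nat)
      qed
      have "(of_nat (count_list (take l y) True + card {i. i < n \<and> v ! i \<and> y ! i}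
              + card {i. i < m \<and> v' ! i \<and> T l ! i}) :: bit) = 0"
        unfolding of_nat_add s1 s2 s3 using bit_alg[OF Vk tot] l nm by simp
      then show ?thesis unfolding \<sigma>_def by (rule sign_from_bit)
    qed
    have "D_op n u v' (psi n yref) z = (-1) ^ card {i. i < m \<and> v' ! i \<and> z ! i} * (c * (\<Sum>l<n. ket (T l) z))"
      using True by (simp add: D RHSref key)
    also have "\<dots> = c * (\<Sum>l<n. (-1) ^ card {i. i < m \<and> v' ! i \<and> z ! i} * ket (T l) z)"
      by (simp add: sum_distrib_left sum_distrib_right algebra_simps)
    finally have RHS: "\<sigma> * D_op n u v' (psi n yref) z = c * (\<Sum>l<n. \<sigma> * (-1) ^ card {i. i < m \<and> v' ! i \<and> z ! i} * ket (T l) z)"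
      by (simp add: sum_distrib_left sum_distrib_right algebra_simps)
    have "(\<Sum>l<n. (-1) ^ count_list (take l y) True * ket (T l) z) = (\<Sum>l<n. \<sigma> * (-1) ^ card {i. i < m \<and> v' ! i \<and> z ! i} * ket (T l) z)"
    proof (intro sum.cong refl)
      fix l assume "l \<in> {..<n}"
      then show "(-1) ^ count_list (take l y) True * ket (T l) z = \<sigma> * (-1) ^ card {i. i < m \<and> v' ! i \<and> z ! i} * ket (T l) z"
        using sign[of l] by (cases "z = T l") (auto simp: ket_def)
    qed
    then have "psi n y z = \<sigma> * D_op n u v' (psi n yref) z" unfolding LHS RHS by simp
    then show ?thesis by (simp add: \<sigma>_def)
  qed
qed
end
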